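(* Let $q\in(0,1]$ and $L>0$. Assume: [A1] there exist $C_L>0$, $\varepsilon_L\in(0,1)$ with $P[\sup_{u\in V_T(r)}\mathbb Z_T(u)\ge\exp(-r^{2-\varepsilon_L})]\le C_L/r^L$ for all $r>0$, $T\in\mathbb T$; [A5] there exists $\lambda>0$ with $\lim_{x\to0}p(x)/|x|^q=\lambda$; [A6] for every $j\in\mathcal J^{(0)}$, $(\xi_T^j)^{-1/q}|\alpha_T^j|^{-1}\to0$ in probability; [A8] for all $M>0$, $\sup_{u\in\mathbb U_T,|u|<M}|\mathbb H_T(\theta^*+a_Tu)-\mathbb H_T(\theta^* )|=O_p(1)$; [A9] for all $M>0$, $\sup_{u,v\in\mathbb U_T,|u|,|v|<M,u\ne v}\frac{|\mathbb H_T(\theta^*+a_Tu)-\mathbb H_T(\theta^*+a_Tv)|}{|u-v|^q}=O_p(1)$. If $\hat u_T=a_T^{-1}(\hat\theta_T-\theta^* )=O_p(1)$, then $\tilde u_T=\tilde a_T^{-1}(\hat\theta_T-\theta^* )=O_p(1)$ as $T\to\infty$.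
   Context: Let $\Theta\subset\mathbb R^{\mathsf p}$ be a bounded open set with closure $\overline\Theta$ and $\theta^*\in\Theta$. Let $(\Omega,\mathcal F,P)$ be a probability space, $\mathbb T\subset\mathbb R_{\ge0}$ with $\sup\mathbb T=\infty$; limits $T\to\infty$ are along $\mathbb T$. For each $T\in\mathbb T$, $\mathbb H_T:\Omega\times\overline\Theta\to\mathbb R$ is a random field continuous in $\theta$ for every $\omega$. The penalty is $p_T(\theta)=\sum_{j=1}^{\mathsf p}\xi_T^jp(\theta_j)$ with (possibly random) $\xi_T^j>0$ and $p:\mathbb R\to\mathbb R_{\ge0}$, $p(0)=0$; $\mathbb H^\dagger_T=\mathbb H_T-p_T$, and $\hat\theta_T:\Omega\to\overline\Theta$ is measurable with $\mathbb H^\dagger_T(\hat\theta_T)=\max_{\overline\Theta}\mathbb H^\dagger_T$. $\mathcal J^{(0)}=\{j:\theta^*_j=0\}$, $\mathcal J^{(1)}=\{j:\theta^*_j\ne0\}$. $a_T=\mathrm{diag}(\alpha_T^1,\dots,\alpha_T^{\mathsf p})$ is deterministic, invertible, with $\|a_T\|\to0$ ($\|\cdot\|$ spectral norm). $\mathbb U_T=\{u:\theta^*+a_Tu\in\overline\Theta\}$, $\mathbb Z_T(u)=\exp(\mathbb H_T(\theta^*+a_Tu)-\mathbb H_T(\theta^* ))$, $V_T(r)=\{u\in\mathbb U_T:|u|\ge r\}$ (supremum over the empty set is $-\infty$). $\tilde a_T$ is diagonal with $(\tilde a_T)_{jj}=(\xi_T^j)^{-1/q}$ for $j\in\mathcal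 J^{(0)}$ and $\alpha_T^j$ for $j\in\mathcal J^{(1)}$. $X_T=O_p(1)$ means tightness: for every $\epsilon>0$ there are $\mathcal T\in\mathbb T$, $M>0$ with $P(|X_T|>M)<\epsilon$ for $T\ge\mathcal T$. *)

theory Defs
  imports "HOL-Probability.Probability"
begin

definition Op1 :: "'a measure \<Rightarrow> real set \<Rightarrow> (real \<Rightarrow> 'a \<Rightarrow> ereal) \<Rightarrow> bool" where
  "Op1 M TT X \<longleftrightarrow> (\<forall>\<epsilon>>0. \<exists>T0\<in>TT. \<exists>K>0. \<forall>T\<in>TT. T \<ge> T0 \<longrightarrow>
      measure M {\<omega> \<in> space M. \<bar>X T \<omega>\<bar> > ereal K} < \<epsilon>)"

definition to_zero_in_prob :: "'a measure \<Rightarrow> real set \<Rightarrow> (real \<Rightarrow> 'a \<Rightarrow> real) \<Rightarrow> bool" where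
  "to_zero_in_prob M TT X \<longleftrightarrow> (\<forall>\<eta>>0. \<forall>\<epsilon>>0. \<exists>T0\<in>TT. \<forall>T\<in>TT. T \<ge> T0 \<longrightarrow>
      measure M {\<omega> \<in> space M. \<bar>X T \<omega>\<bar> > \<eta>} < \<epsilon>)"

definition along :: "real set \<Rightarrow> real filter" where
  "along TT = inf at_top (principal TT)"

definition diagm :: "('n::finite \<Rightarrow> real) \<Rightarrow> real^'n \<Rightarrow> real^'n" where
  "diagm d u = (\<chi> j. d j * u $ j)"

end

theory Submission
  imports Defs
begin


lemma sup_meas:
  fixes f :: "'a \<Rightarrow> 'b::{metric_space, second_countable_topology} \<Rightarrow> real"
  assumes cont: "\<And>\<omega>. \<omega> \<in> space M \<Longrightarrow> continuous_on D (f \<omega>)"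
    and meas: "\<And>d. d \<in> D \<Longrightarrow> (\<lambda>\<omega>. f \<omega> d) \<in> borel_measurable M"
  shows "(\<lambda>\<omega>. SUP d\<in>D. ereal (f \<omega> d)) \<in> borel_measurable M"
proof -
  obtain D0 where D0: "countable D0" "D0 \<subseteq> D" "D \<subseteq> closure D0" using separable by blast
  have eq: "(SUP d\<in>D. ereal (f \<omega> d)) = (SUP d\<in>D0. ereal (f \<omega> d))" if \<omega>: "\<omega> \<in> space M" for \<omega>
  proof (rule antisym)
    show "(SUP d\<in>D0. ereal (f \<omega> d)) \<le> (SUP d\<in>D. ereal (f \<omega> d))"
      using D0(2) by (rule SUP_subset_mono) simp
    show "(SUP d\<in>D. ereal (f \<omega> d)) \<le> (SUP d\<in>D0. ereal (f \<omega> d))"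
    proof (rule SUP_least, rule ccontr)
      fix x assume x: "x \<in> D" and nle: "\<not> ereal (f \<omega> x) \<le> (SUP d\<in>D0. ereal (f \<omega> d))"
      define s where "s = (SUP d\<in>D0. ereal (f \<omega> d))"
      have lt: "s < ereal (f \<omega> x)" using nle s_def by auto
      have "open {y::real. s < ereal y}"
      proof (cases s)
        case (real r) then show ?thesis by (simp add: open_greaterThan[unfolded greaterThan_def])
      next
        case PInf then show ?thesis using lt by simp
      next
        case MInf then show ?thesis by simp
      qed
      then obtain A where A: "open A" "A \<inter> D = f \<omega> -` {y. s < ereal y} \<inter> D"
        using cont[OF \<omega>] unfolding continuous_on_open_invariant by blast
      have "x \<in> A" using A(2) x lt by auto
      moreover have "x \<in> closure D0" using x D0 by auto
      ultimately obtain d where d: "d \<in> D0" "d \<in> A"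
        using A(1) unfolding closure_iff_nhds_not_empty by blast
      then have "s < ereal (f \<omega> d)" using A(2) D0(2) by auto
      moreover have "ereal (f \<omega> d) \<le> s" unfolding s_def using d(1) by (rule SUP_upper)
      ultimately show False by simp
    qed
  qed
  have "(\<lambda>\<omega>. SUP d\<in>D0. ereal (f \<omega> d)) \<in> borel_measurable M"
    using D0 meas by (intro borel_measurable_SUP) auto
  then show ?thesis using eq by (subst measurable_cong[where g="\<lambda>\<omega>. SUP d\<in>D0. ereal (f \<omega> d)"]) auto
qed


lemma diagm_bl: "bounded_linear (diagm (d::'n::finite \<Rightarrow> real))"
proof -
  have "linear (diagm d)"
    by (rule linearI) (auto simp: diagm_def vec_eq_iff algebra_simps)
  then show ?thesis by (simp add: linear_conv_bounded_linear)
qed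

lemma key:
  fixes Hw :: "real^'n \<Rightarrow> real" and xi :: "'n \<Rightarrow> real" and al :: "'n \<Rightarrow> real"
    and th \<theta>s :: "real^'n" and p :: "real \<Rightarrow> real"
  assumes th: "th \<in> closure \<Theta>"
    and mx: "\<forall>\<theta>\<in>closure \<Theta>. Hw \<theta> - (\<Sum>j\<in>UNIV. xi j * p (\<theta> $ j)) \<le> Hw th - (\<Sum>j\<in>UNIV. xi j * p (th $ j))"
    and al: "\<forall>j. al j \<noteq> 0" and xi: "\<forall>j. xi j > 0"
    and ball: "ball \<theta>s r \<subseteq> \<Theta>"
    and pb: "\<forall>x. \<bar>x\<bar> < \<delta> \<longrightarrow> lam / 2 * \<bar>x\<bar> powr q \<le> p x" and p0: "p 0 = 0"
    and lam: "lam > 0" and q: "0 < q" "q \<le> 1"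
    and on: "onorm (diagm al) * K1 < min r \<delta>"
    and nuh: "norm (\<chi> j. (th $ j - \<theta>s $ j) / al j) \<le> K1"
    and K1: "K1 > 0" and K2: "K2 > 0"
    and sb: "\<forall>u v. \<theta>s + diagm al u \<in> closure \<Theta> \<and> \<theta>s + diagm al v \<in> closure \<Theta> \<and> norm u < K1 + 1 \<and> norm v < K1 + 1 \<and> u \<noteq> v
       \<longrightarrow> \<bar>Hw (\<theta>s + diagm al u) - Hw (\<theta>s + diagm al v)\<bar> / norm (u - v) powr q \<le> K2"
    and eps: "\<forall>j. \<theta>s $ j = 0 \<longrightarrow> xi j powr (-1/q) * inverse \<bar>al j\<bar> \<le> (lam / (4 * K2)) powr (1/q) / real CARD('n)"
  shows "norm (\<chi> j. (th $ j - \<theta>s $ j) / (if \<theta>s $ j = 0 then xi j powr (-1/q) else al j)) \<le> K1"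
proof -
  define uh where "uh = (\<chi> j. (th $ j - \<theta>s $ j) / al j)"
  define ub where "ub = (\<chi> j. if \<theta>s $ j = 0 then 0 else uh $ j)"
  define tb where "tb = (\<chi> j. if \<theta>s $ j = 0 then 0 else th $ j)"
  define w where "w j = \<bar>th $ j\<bar> / xi j powr (-1/q)" for j
  define \<eta> where "\<eta> = (lam / (4 * K2)) powr (1/q) / real CARD('n)"
  have diag_uh: "\<theta>s + diagm al uh = th"
    using al by (simp add: vec_eq_iff diagm_def uh_def)
  have diag_ub: "\<theta>s + diagm al ub = tb"
    using al by (simp add: vec_eq_iff diagm_def uh_def ub_def tb_def)
  have bl: "bounded_linear (diagm al)" by (rule diagm_bl)
  have n1: "norm (th - \<theta>s) \<le> onorm (diagm al) * K1"
  proof -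
    have "th - \<theta>s = diagm al uh" using diag_uh by (simp add: algebra_simps)
    then have "norm (th - \<theta>s) \<le> onorm (diagm al) * norm uh" using onorm[OF bl] by simp
    also have "\<dots> \<le> onorm (diagm al) * K1"
      using nuh onorm_pos_le[OF bl] unfolding uh_def by (simp add: mult_left_mono)
    finally show ?thesis .
  qed
  have n2: "norm (tb - \<theta>s) \<le> norm (th - \<theta>s)"
    by (rule norm_le_componentwise_cart) (simp add: tb_def)
  have tb_in: "tb \<in> closure \<Theta>"
  proof -
    have "norm (tb - \<theta>s) < r" using n1 n2 on by simp
    then have "tb \<in> ball \<theta>s r" by (simp add: dist_norm norm_minus_commute)
    then show ?thesis using ball closure_subset by blast
  qed
  have small: "\<bar>th $ j\<bar> < \<delta>" if "\<theta>s $ j = 0" for j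
  proof -
    have "\<bar>th $ j\<bar> = \<bar>(th - \<theta>s) $ j\<bar>" using that by simp
    also have "\<dots> \<le> norm (th - \<theta>s)" by (rule component_le_norm_cart)
    finally show ?thesis using n1 on by simp
  qed
  have nub: "norm ub \<le> norm uh"
    by (rule norm_le_componentwise_cart) (simp add: ub_def)
  have wq: "w j powr q = xi j * \<bar>th $ j\<bar> powr q" for j
  proof -
    have xp: "xi j > 0" using xi by simp
    have "w j powr q = \<bar>th $ j\<bar> powr q / (xi j powr (-1/q)) powr q"
      unfolding w_def using xp by (simp add: powr_divide)
    also have "(xi j powr (-1/q)) powr q = xi j powr (-1)"
      using q xp by (simp add: powr_powr)
    also have "xi j powr (-1) = inverse (xi j)" using xp by (simp add: powr_minus)
    finally show ?thesis by (simp add: divide_inverse)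
  qed
  define h where "h j = (if \<theta>s $ j = 0 then lam / 2 * w j powr q else 0)" for j
  have pen: "(\<Sum>j\<in>UNIV. h j) \<le> Hw th - Hw tb"
  proof -
    have "(\<Sum>j\<in>UNIV. h j) \<le> (\<Sum>j\<in>UNIV. xi j * p (th $ j) - xi j * p (tb $ j))"
    proof (rule sum_mono)
      fix j
      show "h j \<le> xi j * p (th $ j) - xi j * p (tb $ j)"
      proof (cases "\<theta>s $ j = 0")
        case True
        have "lam / 2 * \<bar>th $ j\<bar> powr q \<le> p (th $ j)" using pb small[OF True] by blast
        then have "xi j * (lam / 2 * \<bar>th $ j\<bar> powr q) \<le> xi j * p (th $ j)"
          using xi by (simp add: mult_left_mono less_imp_le)
        then show ?thesis using True p0 by (simp add: h_def tb_def wq algebra_simps)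
      next
        case False then show ?thesis by (simp add: h_def tb_def)
      qed
    qed
    also have "\<dots> = (\<Sum>j\<in>UNIV. xi j * p (th $ j)) - (\<Sum>j\<in>UNIV. xi j * p (tb $ j))"
      by (simp add: sum_subtractf)
    also have "\<dots> \<le> Hw th - Hw tb" using mx tb_in by force
    finally show ?thesis .
  qed
  define g where "g j = (if \<theta>s $ j = 0 then w j else 0)" for j
  define m where "m = Max (range g)"
  have gm: "g j \<le> m" for j unfolding m_def by simp
  obtain j0 where j0: "m = g j0" unfolding m_def
    by (metis (mono_tags, lifting) Max_in UNIV_not_empty finite finite_imageI image_iff image_is_empty)
  have g0: "g j \<ge> 0" for j using xi by (simp add: g_def w_def)
  have m0: "m \<ge> 0" using g0 gm order_trans by blast
  have lhs: "lam / 2 * m powr q \<le> (\<Sum>j\<in>UNIV. h j)"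
  proof -
    have hnn: "h j \<ge> 0" for j using lam by (simp add: h_def)
    have "lam / 2 * m powr q \<le> h j0"
      using j0 by (simp add: h_def g_def)
    also have "\<dots> \<le> (\<Sum>j\<in>UNIV. h j)" by (rule member_le_sum) (auto simp: hnn)
    finally show ?thesis .
  qed
  have comp: "\<bar>(uh - ub) $ j\<bar> \<le> \<eta> * m" for j
  proof (cases "\<theta>s $ j = 0")
    case True
    have "\<bar>(uh - ub) $ j\<bar> = w j * (xi j powr (-1/q) * inverse \<bar>al j\<bar>)"
    proof -
      have "xi j powr (-1/q) > 0" using xi[rule_format, of j] by simp
      then show ?thesis using True by (simp add: uh_def ub_def w_def divide_inverse abs_mult abs_inverse)
    qed
    also have "\<dots> \<le> m * \<eta>"
      using eps True gm[of j] g0[of j] xi by (intro mult_mono) (auto simp: g_def \<eta>_def)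
    finally show ?thesis by (simp add: mult.commute)
  next
    case False
    then show ?thesis using m0 by (simp add: uh_def ub_def \<eta>_def)
  qed
  have nd: "norm (uh - ub) \<le> real CARD('n) * \<eta> * m"
  proof -
    have "norm (uh - ub) \<le> (\<Sum>j\<in>UNIV. \<bar>(uh - ub) $ j\<bar>)" by (rule norm_le_l1_cart)
    also have "\<dots> \<le> real CARD('n) * (\<eta> * m)"
      using sum_bounded_above[of UNIV "\<lambda>j. \<bar>(uh - ub) $ j\<bar>" "\<eta> * m"] comp by simp
    finally show ?thesis by simp
  qed
  have hdiff: "Hw th - Hw tb \<le> K2 * norm (uh - ub) powr q"
  proof (cases "uh = ub")
    case True
    then have "th = tb" using diag_uh diag_ub by simp
    then show ?thesis using K2 by simp
  next
    case False
    have "\<bar>Hw (\<theta>s + diagm al uh) - Hw (\<theta>s + diagm al ub)\<bar> / norm (uh - ub) powr q \<le> K2"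
      using sb[rule_format, of uh ub] diag_uh diag_ub th tb_in nuh nub False
      unfolding uh_def by simp
    moreover have "norm (uh - ub) powr q > 0" using False by simp
    ultimately have "\<bar>Hw th - Hw tb\<bar> \<le> K2 * norm (uh - ub) powr q"
      using diag_uh diag_ub by (simp add: divide_le_eq)
    then show ?thesis by simp
  qed
  have "K2 * norm (uh - ub) powr q \<le> K2 * (real CARD('n) * \<eta> * m) powr q"
    using nd K2 q by (intro mult_left_mono powr_mono2) auto
  also have "\<dots> = lam / 4 * m powr q"
  proof -
    have cp: "real CARD('n) > 0" by simp
    have "real CARD('n) * \<eta> = (lam / (4 * K2)) powr (1/q)" unfolding \<eta>_def using cp by simp
    then have "(real CARD('n) * \<eta> * m) powr q = ((lam / (4 * K2)) powr (1/q)) powr q * m powr q"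
      using m0 lam K2 by (simp add: powr_mult)
    also have "((lam / (4 * K2)) powr (1/q)) powr q = lam / (4 * K2)"
      using q lam K2 by (simp add: powr_powr)
    finally show ?thesis using K2 by simp
  qed
  finally have "lam / 2 * m powr q \<le> lam / 4 * m powr q" using lhs pen hdiff by linarith
  then have "m powr q \<le> 0" using lam by simp
  then have m00: "m = 0" using m0 by simp
  have thz: "th $ j = 0" if "\<theta>s $ j = 0" for j
  proof -
    have "w j = 0" using gm[of j] g0[of j] m00 that by (simp add: g_def)
    then show ?thesis using xi[rule_format, of j] by (simp add: w_def)
  qed
  have "norm (\<chi> j. (th $ j - \<theta>s $ j) / (if \<theta>s $ j = 0 then xi j powr (-1/q) else al j)) \<le> norm uh"
    by (rule norm_le_componentwise_cart) (simp add: uh_def thz)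
  then show ?thesis using nuh unfolding uh_def by simp
qed

theorem theorem3:
  fixes M :: "'a measure"
    and \<Theta> :: "(real^'n) set" and \<theta>s :: "real^'n"
    and TT :: "real set"
    and H :: "real \<Rightarrow> 'a \<Rightarrow> real^'n \<Rightarrow> real"
    and \<xi> :: "real \<Rightarrow> 'a \<Rightarrow> 'n \<Rightarrow> real"
    and p :: "real \<Rightarrow> real"
    and \<theta>hat :: "real \<Rightarrow> 'a \<Rightarrow> real^'n"
    and \<alpha> :: "real \<Rightarrow> 'n \<Rightarrow> real"
    and q L :: real
  defines "U \<equiv> \<lambda>T. {u. \<theta>s + diagm (\<alpha> T) u \<in> closure \<Theta>}"
      and "Z \<equiv> \<lambda>T \<omega> u. exp (H T \<omega> (\<theta>s + diagm (\<alpha> T) u) - H T \<omega> \<theta>s)"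
      and "V \<equiv> \<lambda>T r. {u. \<theta>s + diagm (\<alpha> T) u \<in> closure \<Theta> \<and> norm u \<ge> r}"
  assumes P: "prob_space M"
    and \<Theta>: "bounded \<Theta>" "open \<Theta>" "\<theta>s \<in> \<Theta>"
    and TT: "TT \<subseteq> {0..}" "\<forall>x. \<exists>T\<in>TT. T \<ge> x"
    and H_meas: "\<forall>T\<in>TT. \<forall>\<theta>\<in>closure \<Theta>. (\<lambda>\<omega>. H T \<omega> \<theta>) \<in> borel_measurable M"
    and H_cont: "\<forall>T\<in>TT. \<forall>\<omega>\<in>space M. continuous_on (closure \<Theta>) (H T \<omega>)"
    and \<xi>_meas: "\<forall>T\<in>TT. \<forall>j. (\<lambda>\<omega>. \<xi> T \<omega> j) \<in> borel_measurable M"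
    and \<xi>_pos: "\<forall>T\<in>TT. \<forall>\<omega>\<in>space M. \<forall>j. \<xi> T \<omega> j > 0"
    and p: "\<forall>x. p x \<ge> 0" "p 0 = 0"
    and \<theta>hat_meas: "\<forall>T\<in>TT. \<theta>hat T \<in> borel_measurable M"
    and \<theta>hat_max: "\<forall>T\<in>TT. \<forall>\<omega>\<in>space M. \<theta>hat T \<omega> \<in> closure \<Theta> \<and>
        (\<forall>\<theta>\<in>closure \<Theta>. H T \<omega> \<theta> - (\<Sum>j\<in>UNIV. \<xi> T \<omega> j * p (\<theta> $ j))
           \<le> H T \<omega> (\<theta>hat T \<omega>) - (\<Sum>j\<in>UNIV. \<xi> T \<omega> j * p (\<theta>hat T \<omega> $ j)))"
    and \<alpha>_inv: "\<forall>T\<in>TT. \<forall>j. \<alpha> T j \<noteq> 0"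
    and \<alpha>_lim: "((\<lambda>T. onorm (diagm (\<alpha> T))) \<longlongrightarrow> 0) (along TT)"
    and q: "0 < q" "q \<le> 1"
    and L: "L > 0"
    and A1: "\<exists>CL>0. \<exists>\<epsilon>L. 0 < \<epsilon>L \<and> \<epsilon>L < 1 \<and> (\<forall>r>0. \<forall>T\<in>TT.
        measure M {\<omega> \<in> space M. (SUP u\<in>V T r. ereal (Z T \<omega> u)) \<ge> ereal (exp (- (r powr (2 - \<epsilon>L))))}
          \<le> CL / r powr L)"
    and A5: "\<exists>lam>0. ((\<lambda>x. p x / \<bar>x\<bar> powr q) \<longlongrightarrow> lam) (at 0)"
    and A6: "\<forall>j. \<theta>s $ j = 0 \<longrightarrow>
        to_zero_in_prob M TT (\<lambda>T \<omega>. (\<xi> T \<omega> j) powr (-1/q) * inverse \<bar>\<alpha> T j\<bar>)"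
    and A8: "\<forall>K>0. Op1 M TT (\<lambda>T \<omega>. SUP u\<in>{u \<in> U T. norm u < K}.
        ereal \<bar>H T \<omega> (\<theta>s + diagm (\<alpha> T) u) - H T \<omega> \<theta>s\<bar>)"
    and A9: "\<forall>K>0. Op1 M TT (\<lambda>T \<omega>. SUP (u,v)\<in>{(u,v). u \<in> U T \<and> v \<in> U T \<and> norm u < K \<and> norm v < K \<and> u \<noteq> v}.
        ereal (\<bar>H T \<omega> (\<theta>s + diagm (\<alpha> T) u) - H T \<omega> (\<theta>s + diagm (\<alpha> T) v)\<bar> / norm (u - v) powr q))"
    and uhat: "Op1 M TT (\<lambda>T \<omega>. ereal (norm (\<chi> j. (\<theta>hat T \<omega> $ j - \<theta>s $ j) / \<alpha> T j)))"
  shows "Op1 M TT (\<lambda>T \<omega>. ereal (norm (\<chi> j. (\<theta>hat T \<omega> $ j - \<theta>s $ j) /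
           (if \<theta>s $ j = 0 then (\<xi> T \<omega> j) powr (-1/q) else \<alpha> T j))))"
  proof -
  interpret prob_space M by (rule P)
  have TTne: "\<exists>T. T \<in> TT" using TT(2) by blast
  obtain lam \<delta> where lam: "lam > 0" and \<delta>: "\<delta> > 0"
    and pb: "\<forall>x. \<bar>x\<bar> < \<delta> \<longrightarrow> lam / 2 * \<bar>x\<bar> powr q \<le> p x"
  proof -
    obtain lam where lam: "lam > 0" and lim: "((\<lambda>x. p x / \<bar>x\<bar> powr q) \<longlongrightarrow> lam) (at 0)"
      using A5 by blast
    have "eventually (\<lambda>x. dist (p x / \<bar>x\<bar> powr q) lam < lam / 2) (at (0::real))"
      using tendstoD[OF lim, of "lam / 2"] lam by linarith
    then obtain d where d: "d > 0" and dd: "\<forall>x. x \<noteq> 0 \<and> dist x 0 < d \<longrightarrow> dist (p x / \<bar>x\<bar> powr q) lam < lam / 2"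
      unfolding eventually_at by blast
    have "\<forall>x. \<bar>x\<bar> < d \<longrightarrow> lam / 2 * \<bar>x\<bar> powr q \<le> p x"
    proof (intro allI impI)
      fix x :: real assume x: "\<bar>x\<bar> < d"
      show "lam / 2 * \<bar>x\<bar> powr q \<le> p x"
      proof (cases "x = 0")
        case True then show ?thesis using p by simp
      next
        case False
        then have pos: "\<bar>x\<bar> powr q > 0" by simp
        have "dist (p x / \<bar>x\<bar> powr q) lam < lam / 2" using dd x False by simp
        then have "lam / 2 < p x / \<bar>x\<bar> powr q" unfolding dist_real_def by linarith
        then show ?thesis using pos by (simp add: less_divide_eq)
      qed
    qed
    then show ?thesis using that lam d by blast
  qed
  obtain r where r: "r > 0" "ball \<theta>s r \<subseteq> \<Theta>" using \<Theta>(2,3) open_contains_ball by blast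
  show ?thesis unfolding Op1_def
  proof (intro allI impI)
    fix \<epsilon> :: real assume \<epsilon>: "\<epsilon> > 0"
    have e3: "\<epsilon> / 3 > 0" using \<epsilon> by simp
    obtain T1 K1 where T1: "T1 \<in> TT" and K1: "K1 > 0" and E1b: "\<forall>T\<in>TT. T \<ge> T1 \<longrightarrow>
        measure M {\<omega> \<in> space M. \<bar>ereal (norm (\<chi> j. (\<theta>hat T \<omega> $ j - \<theta>s $ j) / \<alpha> T j))\<bar> > ereal K1} < \<epsilon> / 3"
      using uhat[unfolded Op1_def, rule_format, OF e3] by blast
    define D where "D T = {(u,v). u \<in> U T \<and> v \<in> U T \<and> norm u < K1 + 1 \<and> norm v < K1 + 1 \<and> u \<noteq> v}" for T
    define S where "S T \<omega> = (SUP (u,v)\<in>D T. ereal (\<bar>H T \<omega> (\<theta>s + diagm (\<alpha> T) u) - H T \<omega> (\<theta>s + diagm (\<alpha> T) v)\<bar> / norm (u - v) powr q))" for T \<omega>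
    have K1p: "K1 + 1 > 0" using K1 by simp
    obtain T2 K2 where T2: "T2 \<in> TT" and K2: "K2 > 0" and E2b: "\<forall>T\<in>TT. T \<ge> T2 \<longrightarrow>
        measure M {\<omega> \<in> space M. \<bar>S T \<omega>\<bar> > ereal K2} < \<epsilon> / 3"
      using A9[rule_format, OF K1p, unfolded Op1_def, rule_format, OF e3] unfolding S_def D_def by blast
    define \<eta> where "\<eta> = (lam / (4 * K2)) powr (1/q) / real CARD('n)"
    have \<eta>: "\<eta> > 0" unfolding \<eta>_def using lam K2 by simp
    define n where "n = real CARD('n)"
    have n: "n > 0" unfolding n_def by simp
    define F where "F T j = {\<omega> \<in> space M. \<theta>s $ j = 0 \<and> \<eta> < \<bar>(\<xi> T \<omega> j) powr (-1/q) * inverse \<bar>\<alpha> T j\<bar>\<bar>}" for T j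
    have e3n: "\<epsilon> / (3 * n) > 0" using \<epsilon> n by simp
    have "\<forall>j. \<exists>T0. T0 \<in> TT \<and> (\<forall>T\<in>TT. T \<ge> T0 \<longrightarrow> measure M (F T j) < \<epsilon> / (3 * n))"
    proof
      fix j
      show "\<exists>T0. T0 \<in> TT \<and> (\<forall>T\<in>TT. T \<ge> T0 \<longrightarrow> measure M (F T j) < \<epsilon> / (3 * n))"
      proof (cases "\<theta>s $ j = 0")
        case True
        then show ?thesis using A6[rule_format, OF True, unfolded to_zero_in_prob_def, rule_format, OF \<eta> e3n]
          unfolding F_def by (simp add: True) blast
      next
        case False
        then have "F T j = {}" for T unfolding F_def by simp
        then show ?thesis using TTne e3n by simp
      qed
    qed
    then obtain Tj where Tj: "\<And>j. Tj j \<in> TT" "\<And>j. \<forall>T\<in>TT. T \<ge> Tj j \<longrightarrow> measure M (F T j) < \<epsilon> / (3 * n)"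
      by metis
    define T3 where "T3 = Max (range Tj)"
    have T3: "T3 \<in> TT" unfolding T3_def 
    proof -
      have "Max (range Tj) \<in> range Tj" by (rule Max_in) auto
      then show "Max (range Tj) \<in> TT" using Tj(1) by (metis rangeE)
    qed
    have T3le: "Tj j \<le> T3" for j unfolding T3_def by simp
    define c where "c = min r \<delta> / K1"
    have c: "c > 0" unfolding c_def using r \<delta> K1 by simp
    have "eventually (\<lambda>T. onorm (diagm (\<alpha> T)) < c) (along TT)"
      using order_tendstoD(2)[OF \<alpha>_lim c] .
    then obtain N where N: "\<forall>T\<ge>N. T \<in> TT \<longrightarrow> onorm (diagm (\<alpha> T)) < c"
      unfolding along_def eventually_inf_principal eventually_at_top_linorder by blast
    obtain T4 where T4: "T4 \<in> TT" "T4 \<ge> N" using TT(2) by blast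
    define T0 where "T0 = max (max T1 T2) (max T3 T4)"
    have T0: "T0 \<in> TT" unfolding T0_def using T1 T2 T3 T4 by (simp add: max_def)
    show "\<exists>T0\<in>TT. \<exists>K>0. \<forall>T\<in>TT. T0 \<le> T \<longrightarrow> measure M {\<omega> \<in> space M. ereal K < \<bar>ereal (norm (\<chi> j. (\<theta>hat T \<omega> $ j - \<theta>s $ j) /
           (if \<theta>s $ j = 0 then (\<xi> T \<omega> j) powr (-1/q) else \<alpha> T j)))\<bar>} < \<epsilon>"
    proof (intro bexI[OF _ T0] exI[of _ K1] conjI K1 ballI impI)
      fix T assume T: "T \<in> TT" "T0 \<le> T"
      define E1 where "E1 = {\<omega> \<in> space M. \<bar>ereal (norm (\<chi> j. (\<theta>hat T \<omega> $ j - \<theta>s $ j) / \<alpha> T j))\<bar> > ereal K1}"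
      define E2 where "E2 = {\<omega> \<in> space M. \<bar>S T \<omega>\<bar> > ereal K2}"
      define E3 where "E3 = (\<Union>j. F T j)"
      have m1: "measure M E1 < \<epsilon> / 3" using E1b T T0_def unfolding E1_def by auto
      have m2: "measure M E2 < \<epsilon> / 3" using E2b T T0_def unfolding E2_def by auto
      have mF: "measure M (F T j) < \<epsilon> / (3 * n)" for j using Tj(2)[of j] T3le[of j] T T0_def by auto
      have E1m: "E1 \<in> sets M"
      proof -
        have eqf: "(\<chi> j. (\<theta>hat T \<omega> $ j - \<theta>s $ j) / \<alpha> T j) = diagm (\<lambda>j. inverse (\<alpha> T j)) (\<theta>hat T \<omega> - \<theta>s)" for \<omega>
          by (simp add: vec_eq_iff diagm_def divide_inverse mult.commute)
        have cont: "continuous_on UNIV (\<lambda>x. norm (diagm (\<lambda>j. inverse (\<alpha> T j)) (x - \<theta>s)))"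
          by (intro continuous_on_norm bounded_linear.continuous_on[OF diagm_bl] continuous_on_diff continuous_on_id continuous_on_const)
        have [measurable]: "(\<lambda>\<omega>. norm (\<chi> j. (\<theta>hat T \<omega> $ j - \<theta>s $ j) / \<alpha> T j)) \<in> borel_measurable M"
          unfolding eqf by (rule borel_measurable_continuous_on[where f="\<lambda>x. norm (diagm (\<lambda>j. inverse (\<alpha> T j)) (x - \<theta>s))", OF cont]) (use \<theta>hat_meas T(1) in auto)
        show ?thesis unfolding E1_def by measurable
      qed
      have E2m: "E2 \<in> sets M"
      proof -
        have [measurable]: "S T \<in> borel_measurable M"
        proof -
          define f where "f \<omega> = (\<lambda>d. \<bar>H T \<omega> (\<theta>s + diagm (\<alpha> T) (fst d)) - H T \<omega> (\<theta>s + diagm (\<alpha> T) (snd d))\<bar> / norm (fst d - snd d) powr q)" for \<omega>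
          have Seq: "S T \<omega> = (SUP d\<in>D T. ereal (f \<omega> d))" for \<omega>
            unfolding S_def f_def by (simp add: case_prod_beta)
          have Dsub: "\<And>d. d \<in> D T \<Longrightarrow> \<theta>s + diagm (\<alpha> T) (fst d) \<in> closure \<Theta> \<and> \<theta>s + diagm (\<alpha> T) (snd d) \<in> closure \<Theta> \<and> fst d \<noteq> snd d"
            unfolding D_def U_def by auto
          have "(\<lambda>\<omega>. SUP d\<in>D T. ereal (f \<omega> d)) \<in> borel_measurable M"
          proof (rule sup_meas)
            fix \<omega> assume \<omega>: "\<omega> \<in> space M"
            have Hc: "continuous_on (closure \<Theta>) (H T \<omega>)" using H_cont T(1) \<omega> by blast
            have cf: "continuous_on (D T) (\<lambda>d. \<theta>s + diagm (\<alpha> T) (fst d))"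
              by (rule continuous_on_add[OF continuous_on_const bounded_linear.continuous_on[OF diagm_bl continuous_on_fst[OF continuous_on_id]]])
            have cs: "continuous_on (D T) (\<lambda>d. \<theta>s + diagm (\<alpha> T) (snd d))"
              by (rule continuous_on_add[OF continuous_on_const bounded_linear.continuous_on[OF diagm_bl continuous_on_snd[OF continuous_on_id]]])
            have c1: "continuous_on (D T) (\<lambda>d. H T \<omega> (\<theta>s + diagm (\<alpha> T) (fst d)))"
              by (rule continuous_on_compose2[OF Hc cf]) (use Dsub in blast)
            have c2: "continuous_on (D T) (\<lambda>d. H T \<omega> (\<theta>s + diagm (\<alpha> T) (snd d)))"
              by (rule continuous_on_compose2[OF Hc cs]) (use Dsub in blast)
            have cn: "continuous_on (D T) (\<lambda>d. norm (fst d - snd d))"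
              by (rule continuous_on_norm[OF continuous_on_diff[OF continuous_on_fst[OF continuous_on_id] continuous_on_snd[OF continuous_on_id]]])
            have c3: "continuous_on (D T) (\<lambda>d. norm (fst d - snd d) powr q)"
              by (rule continuous_on_powr[OF cn continuous_on_const]) (use Dsub in force)
            have c4: "continuous_on (D T) (\<lambda>d. \<bar>H T \<omega> (\<theta>s + diagm (\<alpha> T) (fst d)) - H T \<omega> (\<theta>s + diagm (\<alpha> T) (snd d))\<bar>)"
              by (rule continuous_on_rabs[OF continuous_on_diff[OF c1 c2]])
            show "continuous_on (D T) (f \<omega>)" unfolding f_def
              by (rule continuous_on_divide[OF c4 c3]) (use Dsub in force)
          next
            fix d assume d: "d \<in> D T"
            have [measurable]: "(\<lambda>\<omega>. H T \<omega> (\<theta>s + diagm (\<alpha> T) (fst d))) \<in> borel_measurable M"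
              using H_meas T(1) Dsub[OF d] by blast
            have [measurable]: "(\<lambda>\<omega>. H T \<omega> (\<theta>s + diagm (\<alpha> T) (snd d))) \<in> borel_measurable M"
              using H_meas T(1) Dsub[OF d] by blast
            show "(\<lambda>\<omega>. f \<omega> d) \<in> borel_measurable M" unfolding f_def by measurable
          qed
          moreover have "S T = (\<lambda>\<omega>. SUP d\<in>D T. ereal (f \<omega> d))" using Seq by (rule ext)
          ultimately show ?thesis by simp
        qed
        show ?thesis unfolding E2_def by measurable
      qed
      have Fm: "F T j \<in> sets M" for j
      proof -
        have [measurable]: "(\<lambda>\<omega>. \<xi> T \<omega> j) \<in> borel_measurable M" using \<xi>_meas T(1) by blast
        show ?thesis unfolding F_def by measurable
      qed
      have m3: "measure M E3 < \<epsilon> / 3"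
      proof -
        have "measure M E3 \<le> (\<Sum>j\<in>UNIV. measure M (F T j))"
          unfolding E3_def by (rule measure_UNION_le) (auto simp: Fm)
        also have "\<dots> < (\<Sum>j\<in>(UNIV::'n set). \<epsilon> / (3 * n))"
          by (rule sum_strict_mono) (auto simp: mF)
        also have "\<dots> = \<epsilon> / 3" using n unfolding n_def by simp
        finally show ?thesis .
      qed
      have sub: "{\<omega> \<in> space M. ereal K1 < \<bar>ereal (norm (\<chi> j. (\<theta>hat T \<omega> $ j - \<theta>s $ j) /
           (if \<theta>s $ j = 0 then (\<xi> T \<omega> j) powr (-1/q) else \<alpha> T j)))\<bar>} \<subseteq> E1 \<union> E2 \<union> E3"
      proof (rule subsetI, rule ccontr)
        fix \<omega> assume inn: "\<omega> \<in> {\<omega> \<in> space M. ereal K1 < \<bar>ereal (norm (\<chi> j. (\<theta>hat T \<omega> $ j - \<theta>s $ j) /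
           (if \<theta>s $ j = 0 then (\<xi> T \<omega> j) powr (-1/q) else \<alpha> T j)))\<bar>}"
          and nin: "\<omega> \<notin> E1 \<union> E2 \<union> E3"
        have \<omega>M: "\<omega> \<in> space M" using inn by simp
        have th: "\<theta>hat T \<omega> \<in> closure \<Theta>" using \<theta>hat_max T(1) \<omega>M by blast
        have mx: "\<forall>\<theta>\<in>closure \<Theta>. H T \<omega> \<theta> - (\<Sum>j\<in>UNIV. \<xi> T \<omega> j * p (\<theta> $ j)) \<le> H T \<omega> (\<theta>hat T \<omega>) - (\<Sum>j\<in>UNIV. \<xi> T \<omega> j * p (\<theta>hat T \<omega> $ j))"
          using \<theta>hat_max T(1) \<omega>M by blast
        have al: "\<forall>j. \<alpha> T j \<noteq> 0" using \<alpha>_inv T(1) by blast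
        have xi: "\<forall>j. \<xi> T \<omega> j > 0" using \<xi>_pos T(1) \<omega>M by blast
        have on: "onorm (diagm (\<alpha> T)) * K1 < min r \<delta>"
        proof -
          have "onorm (diagm (\<alpha> T)) < c" using N T T4 unfolding T0_def by auto
          then have "onorm (diagm (\<alpha> T)) * K1 < c * K1" using K1 by (simp add: mult_strict_right_mono)
          then show ?thesis unfolding c_def using K1 by simp
        qed
        have nuh: "norm (\<chi> j. (\<theta>hat T \<omega> $ j - \<theta>s $ j) / \<alpha> T j) \<le> K1"
          using nin \<omega>M unfolding E1_def by auto
        have SK: "S T \<omega> \<le> ereal K2"
        proof -
          have "\<not> \<bar>S T \<omega>\<bar> > ereal K2" using nin \<omega>M unfolding E2_def by auto
          then show ?thesis by (cases "S T \<omega>") auto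
        qed
        have sb: "\<forall>u v. \<theta>s + diagm (\<alpha> T) u \<in> closure \<Theta> \<and> \<theta>s + diagm (\<alpha> T) v \<in> closure \<Theta> \<and> norm u < K1 + 1 \<and> norm v < K1 + 1 \<and> u \<noteq> v
           \<longrightarrow> \<bar>H T \<omega> (\<theta>s + diagm (\<alpha> T) u) - H T \<omega> (\<theta>s + diagm (\<alpha> T) v)\<bar> / norm (u - v) powr q \<le> K2"
        proof (intro allI impI)
          fix u v assume uv: "\<theta>s + diagm (\<alpha> T) u \<in> closure \<Theta> \<and> \<theta>s + diagm (\<alpha> T) v \<in> closure \<Theta> \<and> norm u < K1 + 1 \<and> norm v < K1 + 1 \<and> u \<noteq> v"
          then have "(u, v) \<in> D T" unfolding D_def U_def by simp
          then have "(\<lambda>(u,v). ereal (\<bar>H T \<omega> (\<theta>s + diagm (\<alpha> T) u) - H T \<omega> (\<theta>s + diagm (\<alpha> T) v)\<bar> / norm (u - v) powr q)) (u, v) \<le> S T \<omega>"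
            unfolding S_def by (rule SUP_upper)
          then have "(\<lambda>(u,v). ereal (\<bar>H T \<omega> (\<theta>s + diagm (\<alpha> T) u) - H T \<omega> (\<theta>s + diagm (\<alpha> T) v)\<bar> / norm (u - v) powr q)) (u, v) \<le> ereal K2"
            using SK by (rule order_trans)
          then show "\<bar>H T \<omega> (\<theta>s + diagm (\<alpha> T) u) - H T \<omega> (\<theta>s + diagm (\<alpha> T) v)\<bar> / norm (u - v) powr q \<le> K2"
            by simp
        qed
        have eps: "\<forall>j. \<theta>s $ j = 0 \<longrightarrow> \<xi> T \<omega> j powr (-1/q) * inverse \<bar>\<alpha> T j\<bar> \<le> (lam / (4 * K2)) powr (1/q) / real CARD('n)"
        proof (intro allI impI)
          fix j assume j: "\<theta>s $ j = 0"
          have "\<omega> \<notin> F T j" using nin unfolding E3_def by auto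
          then have "\<not> \<eta> < \<bar>(\<xi> T \<omega> j) powr (-1/q) * inverse \<bar>\<alpha> T j\<bar>\<bar>" using j \<omega>M unfolding F_def by auto
          then show "\<xi> T \<omega> j powr (-1/q) * inverse \<bar>\<alpha> T j\<bar> \<le> (lam / (4 * K2)) powr (1/q) / real CARD('n)"
            unfolding \<eta>_def by linarith
        qed
        have "norm (\<chi> j. (\<theta>hat T \<omega> $ j - \<theta>s $ j) / (if \<theta>s $ j = 0 then \<xi> T \<omega> j powr (-1/q) else \<alpha> T j)) \<le> K1"
          by (rule key[OF th mx al xi r(2) pb p(2) lam q on nuh K1 K2 sb eps])
        then show False using inn by simp
      qed
      have "measure M {\<omega> \<in> space M. ereal K1 < \<bar>ereal (norm (\<chi> j. (\<theta>hat T \<omega> $ j - \<theta>s $ j) /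
           (if \<theta>s $ j = 0 then (\<xi> T \<omega> j) powr (-1/q) else \<alpha> T j)))\<bar>} \<le> measure M (E1 \<union> E2 \<union> E3)"
        using sub E1m E2m Fm unfolding E3_def by (intro finite_measure_mono) auto
      also have "\<dots> \<le> measure M (E1 \<union> E2) + measure M E3"
        using E1m E2m Fm unfolding E3_def by (intro measure_Un_le) auto
      also have "\<dots> \<le> measure M E1 + measure M E2 + measure M E3"
        using E1m E2m measure_Un_le by (simp add: measure_Un_le)
      also have "\<dots> < \<epsilon>" using m1 m2 m3 by simp
      finally show "measure M {\<omega> \<in> space M. ereal K1 < \<bar>ereal (norm (\<chi> j. (\<theta>hat T \<omega> $ j - \<theta>s $ j) /
           (if \<theta>s $ j = 0 then (\<xi> T \<omega> j) powr (-1/q) else \<alpha> T j)))\<bar>} < \<epsilon>" .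
    qed
  qed
qed

end
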